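(* Let $n\ge 1$ and $\tau\in\mathfrak S_n$, and write $\tau=\tau^a\,n\,\tau^b$ where $\tau^a$ and $\tau^b$ are the (possibly empty) factors before and after the entry $n$. Then $\tau\in\mathrm{Sort}_n(\mathrm{SC}_{\underline{12}3})$ if and only if all of the following hold: (1) every entry of $\tau^a$ is greater than every entry of $\tau^b$; (2) $\tau^a$ avoids the vincular pattern $3\underline{21}$ and the classical pattern $132$; (3) $\tau^b$ avoids the classical pattern $213$.
   Context: $\mathfrak S_n$ is the set of permutations of $\{1,\dots,n\}$. A vincular pattern is a permutation with some entries underlined; a sequence contains it if it has a subsequence with the same relative order in which entries corresponding to adjacent underlined entries occupy consecutive positions; classical patterns have no underlining. An occurrence of $\underline{12}3$ is $a_j a_{j+1} a_l$ with $l>j+1$ and $a_j<a_{j+1}<a_l$; an occurrence of $3\underline{21}$ is $a_i a_j a_{j+1}$ with $i<j$ and $a_{j+1}<a_j<a_i$. For a pattern $\sigma$, the map $\mathrm{SC}_\sigma$ acts on $\tau$: read entries left to right; when the next entry $x$ is read, if pushing $x$ yields a stack whose entries read top to bottom (stack adjacency = consecutive positions) avoid $\sigma$, push $x$; otherwise pop the top stack entry to the output and repeat. At the end pop all remaining entries; the output is $\mathrm{SC}_\sigma(\tau)$. West's stack-sorting map is $s=\mathrm{SC}_{21}$. $\mathrm{Sort}_n(\mathrm{SC}_\sigma)=\{\tau\in\mathfrak S_n : s(\mathrm{SC}_\sigma(\tau))=12\cdots n\}$. *)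

theory Defs
  imports Main
begin

definition perms :: "nat \<Rightarrow> nat list set" where
  "perms n = {w. distinct w \<and> set w = {1..n}}"

text \<open>The pattern is a permutation sigma (list of
  its entries) together with a set A of 0-based positions i meaning that pattern
  entries i and i+1 are underlined together (must occupy consecutive positions). Classical patterns have A = {}.\<close>
definition contains_vinc :: "nat list \<Rightarrow> nat set \<Rightarrow> 'a::linorder list \<Rightarrow> bool" where
  "contains_vinc sigma A w \<longleftrightarrow>
     (\<exists>idx :: nat list. length idx = length sigma \<and> sorted_wrt (<) idx \<and>
        (\<forall>p\<in>set idx. p < length w) \<and>
        (\<forall>i j. i < length sigma \<longrightarrow> j < length sigma \<longrightarrow>
             (w ! (idx ! i) < w ! (idx ! j) \<longleftrightarrow> sigma ! i < sigma ! j)) \<and>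
        (\<forall>i\<in>A. Suc i < length sigma \<longrightarrow> idx ! Suc i = Suc (idx ! i)))"

definition avoids_vinc :: "nat list \<Rightarrow> nat set \<Rightarrow> 'a::linorder list \<Rightarrow> bool" where
  "avoids_vinc sigma A w \<longleftrightarrow> \<not> contains_vinc sigma A w"

text \<open>Arguments: the avoidance test, remaining
  input, stack (head = top of stack), output so far. The stack word read top to
  bottom is the stack list itself. If pushing x is forbidden but the stack is
  empty, x is pushed anyway (this case never arises for patterns of length
  at least 2, which are the only ones used here).\<close>
function sc_run :: "('a list \<Rightarrow> bool) \<Rightarrow> 'a list \<Rightarrow> 'a list \<Rightarrow> 'a list \<Rightarrow> 'a list" where
  "sc_run ok [] st out = out @ st"
| "sc_run ok (x # xs) st out =
     (if ok (x # st) then sc_run ok xs (x # st) out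
      else (case st of [] \<Rightarrow> sc_run ok xs [x] out
                     | y # ys \<Rightarrow> sc_run ok (x # xs) ys (out @ [y])))"
  by pat_completeness auto
termination
  by (relation "measure (\<lambda>(_, inp, st, _). 2 * length inp + length st)") auto

definition SC :: "nat list \<Rightarrow> nat set \<Rightarrow> 'a::linorder list \<Rightarrow> 'a list" where
  "SC sigma A tau = sc_run (avoids_vinc sigma A) tau [] []"

definition west_s :: "'a::linorder list \<Rightarrow> 'a list" where
  "west_s tau = SC [2, 1] {} tau"

definition Sort :: "nat \<Rightarrow> nat list \<Rightarrow> nat set \<Rightarrow> nat list set" where
  "Sort n sigma A = {tau \<in> perms n. west_s (SC sigma A tau) = [1..<n+1]}"

end

theory Submission
  imports Defs "HOL-Library.Multiset"
begin


fun has2 :: "('a \<Rightarrow> 'a \<Rightarrow> bool) \<Rightarrow> 'a list \<Rightarrow> bool" where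
  "has2 Q [] = False"
| "has2 Q (x # w) = ((\<exists>y\<in>set w. Q x y) \<or> has2 Q w)"

fun has3 :: "('a \<Rightarrow> 'a \<Rightarrow> 'a \<Rightarrow> bool) \<Rightarrow> 'a list \<Rightarrow> bool" where
  "has3 P [] = False"
| "has3 P (x # w) = (has2 (P x) w \<or> has3 P w)"

lemma has2_append: "has2 Q (A @ B) \<longleftrightarrow> has2 Q A \<or> has2 Q B \<or> (\<exists>x\<in>set A. \<exists>y\<in>set B. Q x y)"
  by (induction A) auto

lemma has3_append: "has3 P (A @ B) \<longleftrightarrow> has3 P A \<or> has3 P B \<or> (\<exists>x\<in>set A. has2 (P x) B)
   \<or> has2 (\<lambda>x y. \<exists>z\<in>set B. P x y z) A"
  by (induction A) (auto simp: has2_append)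

lemma has2_rev: "has2 Q (rev w) \<longleftrightarrow> has2 (\<lambda>a b. Q b a) w"
  by (induction w) (auto simp: has2_append)

lemma has3_rev: "has3 P (rev w) \<longleftrightarrow> has3 (\<lambda>a b c. P c b a) w"
  by (induction w) (auto simp: has3_append has2_rev)

lemma has2_idx: "has2 Q w \<longleftrightarrow> (\<exists>i j. i < j \<and> j < length w \<and> Q (w!i) (w!j))"
proof (induction w)
  case Nil then show ?case by simp
next
  case (Cons x w)
  show ?case
  proof
    assume "has2 Q (x # w)"
    then consider (a) "\<exists>y\<in>set w. Q x y" | (b) "has2 Q w" by auto
    then show "\<exists>i j. i < j \<and> j < length (x#w) \<and> Q ((x#w)!i) ((x#w)!j)"
    proof cases
      case a
      then obtain j where "j < length w" "Q x (w!j)" by (metis in_set_conv_nth)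
      then show ?thesis by (intro exI[of _ 0] exI[of _ "Suc j"]) auto
    next
      case b
      then obtain i j where "i < j" "j < length w" "Q (w!i) (w!j)" using Cons.IH by blast
      then show ?thesis by (intro exI[of _ "Suc i"] exI[of _ "Suc j"]) auto
    qed
  next
    assume "\<exists>i j. i < j \<and> j < length (x#w) \<and> Q ((x#w)!i) ((x#w)!j)"
    then obtain i j where ij: "i < j" "j < length (x#w)" "Q ((x#w)!i) ((x#w)!j)" by blast
    then obtain j' where j': "j = Suc j'" by (cases j) auto
    show "has2 Q (x # w)"
    proof (cases i)
      case 0
      then have "Q x (w!j')" using ij j' by simp
      moreover have "w!j' \<in> set w" using ij j' by simp
      ultimately show ?thesis by auto
    next
      case (Suc i')
      then have "has2 Q w" using Cons.IH ij j' by auto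
      then show ?thesis by simp
    qed
  qed
qed

lemma has3_idx: "has3 P w \<longleftrightarrow> (\<exists>i j k. i < j \<and> j < k \<and> k < length w \<and> P (w!i) (w!j) (w!k))"
proof (induction w)
  case Nil then show ?case by simp
next
  case (Cons x w)
  show ?case
  proof
    assume "has3 P (x # w)"
    then consider (a) "has2 (P x) w" | (b) "has3 P w" by auto
    then show "\<exists>i j k. i < j \<and> j < k \<and> k < length (x#w) \<and> P ((x#w)!i) ((x#w)!j) ((x#w)!k)"
    proof cases
      case a
      then obtain j k where "j < k" "k < length w" "P x (w!j) (w!k)" by (auto simp: has2_idx)
      then show ?thesis by (intro exI[of _ 0] exI[of _ "Suc j"] exI[of _ "Suc k"]) auto
    next
      case b
      then obtain i j k where "i < j" "j < k" "k < length w" "P (w!i) (w!j) (w!k)" using Cons.IH by blast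
      then show ?thesis by (intro exI[of _ "Suc i"] exI[of _ "Suc j"] exI[of _ "Suc k"]) auto
    qed
  next
    assume "\<exists>i j k. i < j \<and> j < k \<and> k < length (x#w) \<and> P ((x#w)!i) ((x#w)!j) ((x#w)!k)"
    then obtain i j k where ij: "i < j" "j < k" "k < length (x#w)" "P ((x#w)!i) ((x#w)!j) ((x#w)!k)" by blast
    then obtain j' k' where j': "j = Suc j'" "k = Suc k'" by (cases j; cases k) auto
    show "has3 P (x # w)"
    proof (cases i)
      case 0
      then have "has2 (P x) w" using ij j' by (auto simp: has2_idx)
      then show ?thesis by simp
    next
      case (Suc i')
      then have "has3 P w" using Cons.IH ij j' by auto
      then show ?thesis by simp
    qed
  qed
qed

lemma len3: "length idx = 3 \<Longrightarrow> \<exists>i j k. idx = [i, j, k]"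
  by (auto simp: numeral_3_eq_3 length_Suc_conv)

lemma len2: "length idx = 2 \<Longrightarrow> \<exists>i j. idx = [i, j]"
  by (auto simp: numeral_2_eq_2 length_Suc_conv)

lemma less3: "(i::nat) < 3 \<longleftrightarrow> i = 0 \<or> i = 1 \<or> i = 2" by auto
lemma less2: "(i::nat) < 2 \<longleftrightarrow> i = 0 \<or> i = 1" by auto

lemma contains3:
  "contains_vinc [a,b,c] A (w::'a::linorder list) \<longleftrightarrow>
   (\<exists>i j k. i < j \<and> j < k \<and> k < length w \<and>
     (w!i < w!j \<longleftrightarrow> a < b) \<and> (w!j < w!i \<longleftrightarrow> b < a) \<and>
     (w!i < w!k \<longleftrightarrow> a < c) \<and> (w!k < w!i \<longleftrightarrow> c < a) \<and>
     (w!j < w!k \<longleftrightarrow> b < c) \<and> (w!k < w!j \<longleftrightarrow> c < b) \<and>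
     (0 \<in> A \<longrightarrow> j = Suc i) \<and> (1 \<in> A \<longrightarrow> k = Suc j))"
  (is "?L \<longleftrightarrow> ?R")
proof
  assume ?L
  then obtain idx where H0: "length idx = length [a,b,c]" "sorted_wrt (<) idx" "\<forall>p\<in>set idx. p < length w"
    "\<forall>i j. i < length [a,b,c] \<longrightarrow> j < length [a,b,c] \<longrightarrow> (w ! (idx ! i) < w ! (idx ! j) \<longleftrightarrow> [a,b,c] ! i < [a,b,c] ! j)"
    "\<forall>i\<in>A. Suc i < length [a,b,c] \<longrightarrow> idx ! Suc i = Suc (idx ! i)"
    unfolding contains_vinc_def by blast
  have l: "length [a,b,c] = 3" by simp
  have H: "length idx = 3" "sorted_wrt (<) idx" "\<forall>p\<in>set idx. p < length w"
    "\<forall>i j. i < 3 \<longrightarrow> j < 3 \<longrightarrow> (w ! (idx ! i) < w ! (idx ! j) \<longleftrightarrow> [a,b,c] ! i < [a,b,c] ! j)"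
    "\<forall>i\<in>A. Suc i < 3 \<longrightarrow> idx ! Suc i = Suc (idx ! i)" using H0 unfolding l by blast+
  obtain i j k where idx: "idx = [i,j,k]" using len3[OF H(1)] by blast
  show ?R
    apply (rule exI[of _ i], rule exI[of _ j], rule exI[of _ k])
    using H(2,3) H(4)[rule_format, of 0 1] H(4)[rule_format, of 1 0] H(4)[rule_format, of 0 2]
      H(4)[rule_format, of 2 0] H(4)[rule_format, of 1 2] H(4)[rule_format, of 2 1]
      H(5)[rule_format, of 0] H(5)[rule_format, of 1]
    by (simp add: idx)
next
  assume ?R
  then obtain i j k where H: "i < j \<and> j < k \<and> k < length w \<and>
     (w!i < w!j \<longleftrightarrow> a < b) \<and> (w!j < w!i \<longleftrightarrow> b < a) \<and>
     (w!i < w!k \<longleftrightarrow> a < c) \<and> (w!k < w!i \<longleftrightarrow> c < a) \<and>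
     (w!j < w!k \<longleftrightarrow> b < c) \<and> (w!k < w!j \<longleftrightarrow> c < b) \<and>
     (0 \<in> A \<longrightarrow> j = Suc i) \<and> (1 \<in> A \<longrightarrow> k = Suc j)" by blast
  show ?L unfolding contains_vinc_def
    apply (rule exI[of _ "[i,j,k]"])
    using H by (simp add: less3 less2 imp_disjL all_conj_distrib less_Suc_eq Ball_def) blast
qed

lemma contains2:
  "contains_vinc [a,b] {} (w::'a::linorder list) \<longleftrightarrow>
   (\<exists>i j. i < j \<and> j < length w \<and>
     (w!i < w!j \<longleftrightarrow> a < b) \<and> (w!j < w!i \<longleftrightarrow> b < a))"
  (is "?L \<longleftrightarrow> ?R")
proof
  assume ?L
  then obtain idx where H0: "length idx = length [a,b]" "sorted_wrt (<) idx" "\<forall>p\<in>set idx. p < length w"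
    "\<forall>i j. i < length [a,b] \<longrightarrow> j < length [a,b] \<longrightarrow> (w ! (idx ! i) < w ! (idx ! j) \<longleftrightarrow> [a,b] ! i < [a,b] ! j)"
    unfolding contains_vinc_def by blast
  have l: "length [a,b] = 2" by simp
  have H: "length idx = 2" "sorted_wrt (<) idx" "\<forall>p\<in>set idx. p < length w"
    "\<forall>i j. i < 2 \<longrightarrow> j < 2 \<longrightarrow> (w ! (idx ! i) < w ! (idx ! j) \<longleftrightarrow> [a,b] ! i < [a,b] ! j)"
    using H0 unfolding l by blast+
  obtain i j where idx: "idx = [i,j]" using len2[OF H(1)] by blast
  show ?R
    apply (rule exI[of _ i], rule exI[of _ j])
    using H(2,3) H(4)[rule_format, of 0 1] H(4)[rule_format, of 1 0]
    by (simp add: idx)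
next
  assume ?R
  then obtain i j where H: "i < j \<and> j < length w \<and>
     (w!i < w!j \<longleftrightarrow> a < b) \<and> (w!j < w!i \<longleftrightarrow> b < a)" by blast
  show ?L unfolding contains_vinc_def
    apply (rule exI[of _ "[i,j]"])
    using H by (simp add: less2 imp_disjL all_conj_distrib less_Suc_eq Ball_def)
qed



definition c123 :: "'a::linorder list \<Rightarrow> bool" where
  "c123 w \<longleftrightarrow> (\<exists>i k. Suc i < k \<and> k < length w \<and> w!i < w!Suc i \<and> w!Suc i < w!k)"

definition c321 :: "'a::linorder list \<Rightarrow> bool" where
  "c321 w \<longleftrightarrow> (\<exists>i j. i < j \<and> Suc j < length w \<and> w!Suc j < w!j \<and> w!j < w!i)"

lemma vinc123: "contains_vinc [1,2,3] {0} (w::'a::linorder list) \<longleftrightarrow> c123 w"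
  unfolding contains3 c123_def
proof
  assume "\<exists>i j k. i < j \<and> j < k \<and> k < length w \<and>
     (w!i < w!j \<longleftrightarrow> (1::nat) < 2) \<and> (w!j < w!i \<longleftrightarrow> (2::nat) < 1) \<and>
     (w!i < w!k \<longleftrightarrow> (1::nat) < 3) \<and> (w!k < w!i \<longleftrightarrow> (3::nat) < 1) \<and>
     (w!j < w!k \<longleftrightarrow> (2::nat) < 3) \<and> (w!k < w!j \<longleftrightarrow> (3::nat) < 2) \<and>
     (0 \<in> {0::nat} \<longrightarrow> j = Suc i) \<and> (1 \<in> {0::nat} \<longrightarrow> k = Suc j)"
  then obtain i j k where "i < j" "j < k" "k < length w" "w!i < w!j" "w!j < w!k" "j = Suc i" by auto
  then show "\<exists>i k. Suc i < k \<and> k < length w \<and> w!i < w!Suc i \<and> w!Suc i < w!k" by blast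
next
  assume "\<exists>i k. Suc i < k \<and> k < length w \<and> w!i < w!Suc i \<and> w!Suc i < w!k"
  then obtain i k where H: "Suc i < k" "k < length w" "w!i < w!Suc i" "w!Suc i < w!k" by blast
  show "\<exists>i j k. i < j \<and> j < k \<and> k < length w \<and>
     (w!i < w!j \<longleftrightarrow> (1::nat) < 2) \<and> (w!j < w!i \<longleftrightarrow> (2::nat) < 1) \<and>
     (w!i < w!k \<longleftrightarrow> (1::nat) < 3) \<and> (w!k < w!i \<longleftrightarrow> (3::nat) < 1) \<and>
     (w!j < w!k \<longleftrightarrow> (2::nat) < 3) \<and> (w!k < w!j \<longleftrightarrow> (3::nat) < 2) \<and>
     (0 \<in> {0::nat} \<longrightarrow> j = Suc i) \<and> (1 \<in> {0::nat} \<longrightarrow> k = Suc j)"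
    apply (rule exI[of _ i], rule exI[of _ "Suc i"], rule exI[of _ k])
    using H by auto
qed

lemma vinc321: "contains_vinc [3,2,1] {1} (w::'a::linorder list) \<longleftrightarrow> c321 w"
  unfolding contains3 c321_def
proof
  assume "\<exists>i j k. i < j \<and> j < k \<and> k < length w \<and>
     (w!i < w!j \<longleftrightarrow> (3::nat) < 2) \<and> (w!j < w!i \<longleftrightarrow> (2::nat) < 3) \<and>
     (w!i < w!k \<longleftrightarrow> (3::nat) < 1) \<and> (w!k < w!i \<longleftrightarrow> (1::nat) < 3) \<and>
     (w!j < w!k \<longleftrightarrow> (2::nat) < 1) \<and> (w!k < w!j \<longleftrightarrow> (1::nat) < 2) \<and>
     (0 \<in> {1::nat} \<longrightarrow> j = Suc i) \<and> (1 \<in> {1::nat} \<longrightarrow> k = Suc j)"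
  then obtain i j k where "i < j" "j < k" "k < length w" "w!j < w!i" "w!k < w!j" "k = Suc j" by auto
  then show "\<exists>i j. i < j \<and> Suc j < length w \<and> w!Suc j < w!j \<and> w!j < w!i" by blast
next
  assume "\<exists>i j. i < j \<and> Suc j < length w \<and> w!Suc j < w!j \<and> w!j < w!i"
  then obtain i j where H: "i < j" "Suc j < length w" "w!Suc j < w!j" "w!j < w!i" by blast
  show "\<exists>i j k. i < j \<and> j < k \<and> k < length w \<and>
     (w!i < w!j \<longleftrightarrow> (3::nat) < 2) \<and> (w!j < w!i \<longleftrightarrow> (2::nat) < 3) \<and>
     (w!i < w!k \<longleftrightarrow> (3::nat) < 1) \<and> (w!k < w!i \<longleftrightarrow> (1::nat) < 3) \<and>
     (w!j < w!k \<longleftrightarrow> (2::nat) < 1) \<and> (w!k < w!j \<longleftrightarrow> (1::nat) < 2) \<and>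
     (0 \<in> {1::nat} \<longrightarrow> j = Suc i) \<and> (1 \<in> {1::nat} \<longrightarrow> k = Suc j)"
    apply (rule exI[of _ i], rule exI[of _ j], rule exI[of _ "Suc j"])
    using H by auto
qed

lemma vinc132: "contains_vinc [1,3,2] {} (w::'a::linorder list) \<longleftrightarrow> has3 (\<lambda>a b c. a < c \<and> c < b) w"
  unfolding contains3 has3_idx
  apply (rule iffI)
   apply (elim exE, rule_tac x=i in exI, rule_tac x=j in exI, rule_tac x=k in exI, simp)
  apply (elim exE, rule_tac x=i in exI, rule_tac x=j in exI, rule_tac x=k in exI, auto)
  done

lemma vinc213: "contains_vinc [2,1,3] {} (w::'a::linorder list) \<longleftrightarrow> has3 (\<lambda>a b c. b < a \<and> a < c) w"
  unfolding contains3 has3_idx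
  apply (rule iffI)
   apply (elim exE, rule_tac x=i in exI, rule_tac x=j in exI, rule_tac x=k in exI, simp)
  apply (elim exE, rule_tac x=i in exI, rule_tac x=j in exI, rule_tac x=k in exI, auto)
  done

lemma vinc21: "contains_vinc [2,1] {} (w::'a::linorder list) \<longleftrightarrow> has2 (\<lambda>a b. b < a) w"
  unfolding contains2 has2_idx
  apply (rule iffI)
   apply (elim exE, rule_tac x=i in exI, rule_tac x=j in exI, simp)
  apply (elim exE, rule_tac x=i in exI, rule_tac x=j in exI, auto)
  done

lemma vinc12: "contains_vinc [1,2] {} (w::'a::linorder list) \<longleftrightarrow> has2 (<) w"
  unfolding contains2 has2_idx
  apply (rule iffI)
   apply (elim exE, rule_tac x=i in exI, rule_tac x=j in exI, simp)
  apply (elim exE, rule_tac x=i in exI, rule_tac x=j in exI, auto)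
  done

lemma c123_Cons: "c123 (x # S) \<longleftrightarrow> c123 S \<or> (\<exists>y ys. S = y # ys \<and> x < y \<and> (\<exists>z\<in>set ys. y < z))"
proof
  assume "c123 (x # S)"
  then obtain i k where H: "Suc i < k" "k < length (x#S)" "(x#S)!i < (x#S)!Suc i" "(x#S)!Suc i < (x#S)!k"
    unfolding c123_def by blast
  obtain y ys where S: "S = y # ys" using H by (cases S) auto
  obtain k' where k: "k = Suc (Suc k')" using H by (cases k; cases "k - 1") auto
  show "c123 S \<or> (\<exists>y ys. S = y # ys \<and> x < y \<and> (\<exists>z\<in>set ys. y < z))"
  proof (cases i)
    case 0
    then have "x < y" "y < ys!k'" "k' < length ys" using H S k by auto
    then show ?thesis using S by auto
  next
    case (Suc i')
    then have "c123 S" unfolding c123_def using H k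
      by (intro exI[of _ i'] exI[of _ "Suc k'"]) auto
    then show ?thesis by simp
  qed
next
  assume "c123 S \<or> (\<exists>y ys. S = y # ys \<and> x < y \<and> (\<exists>z\<in>set ys. y < z))"
  then show "c123 (x # S)"
  proof
    assume "c123 S"
    then obtain i k where H: "Suc i < k" "k < length S" "S!i < S!Suc i" "S!Suc i < S!k"
      unfolding c123_def by blast
    then show ?thesis unfolding c123_def by (intro exI[of _ "Suc i"] exI[of _ "Suc k"]) auto
  next
    assume "\<exists>y ys. S = y # ys \<and> x < y \<and> (\<exists>z\<in>set ys. y < z)"
    then obtain y ys z where H: "S = y # ys" "x < y" "z \<in> set ys" "y < z" by blast
    then obtain k where "k < length ys" "ys!k = z" by (metis in_set_conv_nth)
    then show ?thesis unfolding c123_def using H by (intro exI[of _ 0] exI[of _ "Suc (Suc k)"]) auto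
  qed
qed

lemma c123_rev: "c123 (rev w) \<longleftrightarrow> c321 w"
proof
  assume "c123 (rev w)"
  then obtain i k where H: "Suc i < k" "k < length w" "rev w!i < rev w!Suc i" "rev w!Suc i < rev w!k"
    unfolding c123_def by auto
  have e1: "rev w ! i = w ! (length w - Suc i)" "rev w ! Suc i = w ! (length w - Suc (Suc i))"
     "rev w ! k = w ! (length w - Suc k)" using H by (auto simp: rev_nth)
  have e2: "length w - Suc i = Suc (length w - Suc (Suc i))" using H by auto
  show "c321 w" unfolding c321_def
    apply (rule exI[of _ "length w - Suc k"], rule exI[of _ "length w - Suc (Suc i)"])
    using H e1 e2 by auto
next
  assume "c321 w"
  then obtain i j where H: "i < j" "Suc j < length w" "w!Suc j < w!j" "w!j < w!i"
    unfolding c321_def by blast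
  define i' where "i' = length w - Suc (Suc j)"
  have e1: "rev w ! i' = w ! Suc j" "rev w ! Suc i' = w ! j"
     "rev w ! (length w - Suc i) = w ! i" using H by (auto simp: rev_nth i'_def Suc_diff_Suc)
  show "c123 (rev w)" unfolding c123_def
    apply (rule exI[of _ i'], rule exI[of _ "length w - Suc i"])
    using H e1 by (auto simp: i'_def)
qed

lemma c321_append: "c321 w \<Longrightarrow> c321 (w @ v)"
  unfolding c321_def by (auto simp: nth_append)

lemma c321_single: "\<not> c321 [x]"
  unfolding c321_def by auto



function sc_steps :: "('a list \<Rightarrow> bool) \<Rightarrow> 'a list \<Rightarrow> 'a list \<Rightarrow> 'a list \<Rightarrow> 'a list \<times> 'a list" where
  "sc_steps ok [] st out = (st, out)"
| "sc_steps ok (x # xs) st out =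
     (if ok (x # st) then sc_steps ok xs (x # st) out
      else (case st of [] \<Rightarrow> sc_steps ok xs [x] out
                     | y # ys \<Rightarrow> sc_steps ok (x # xs) ys (out @ [y])))"
  by pat_completeness auto
termination
  by (relation "measure (\<lambda>(_, inp, st, _). 2 * length inp + length st)") auto

lemma sc_run_push: "ok (x # st) \<Longrightarrow> sc_run ok (x # xs) st out = sc_run ok xs (x # st) out" by simp
lemma sc_run_forced: "\<not> ok [x] \<Longrightarrow> sc_run ok (x # xs) [] out = sc_run ok xs [x] out" by simp
lemma sc_run_pop: "\<not> ok (x # y # ys) \<Longrightarrow> sc_run ok (x # xs) (y # ys) out = sc_run ok (x # xs) ys (out @ [y])" by simp
lemma sc_steps_push: "ok (x # st) \<Longrightarrow> sc_steps ok (x # xs) st out = sc_steps ok xs (x # st) out" by simp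
lemma sc_steps_forced: "\<not> ok [x] \<Longrightarrow> sc_steps ok (x # xs) [] out = sc_steps ok xs [x] out" by simp
lemma sc_steps_pop: "\<not> ok (x # y # ys) \<Longrightarrow> sc_steps ok (x # xs) (y # ys) out = sc_steps ok (x # xs) ys (out @ [y])" by simp

declare sc_run.simps(2)[simp del] sc_steps.simps(2)[simp del]

lemma sc_run_split:
  "sc_run ok (xs @ ys) st out = (case sc_steps ok xs st out of (st', out') \<Rightarrow> sc_run ok ys st' out')"
proof (induction ok xs st out rule: sc_steps.induct)
  case (1 ok st out) then show ?case by (simp add: add_ac)
next
  case (2 ok x xs st out)
  show ?case
  proof (cases "ok (x # st)")
    case True then show ?thesis using 2(1) by (simp add: sc_run_push sc_steps_push)
  next
    case False
    show ?thesis
    proof (cases st)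
      case Nil then show ?thesis using False 2(2) by (simp add: sc_run_forced sc_steps_forced)
    next
      case (Cons y ys) then show ?thesis using False 2(3)[of y ys] by (simp add: sc_run_pop sc_steps_pop)
    qed
  qed
qed

lemma sc_run_steps:
  "sc_run ok xs st out = (case sc_steps ok xs st out of (st', out') \<Rightarrow> out' @ st')"
  using sc_run_split[of ok xs "[]" st out] by (simp split: prod.split)

lemma sc_run_out: "sc_run ok xs st (out1 @ out2) = out1 @ sc_run ok xs st out2"
proof (induction ok xs st out2 arbitrary: out1 rule: sc_run.induct)
  case (1 ok st out) then show ?case by (simp add: add_ac)
next
  case (2 ok x xs st out)
  show ?case
  proof (cases "ok (x # st)")
    case True then show ?thesis using 2(1) by (simp add: sc_run_push)
  next
    case False
    show ?thesis
    proof (cases st)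
      case Nil then show ?thesis using False 2(2) by (simp add: sc_run_forced)
    next
      case (Cons y ys) then show ?thesis using False 2(3)[of y ys] by (simp add: sc_run_pop)
    qed
  qed
qed

lemma sc_run_out0: "sc_run ok xs st out = out @ sc_run ok xs st []"
  using sc_run_out[of ok xs st out "[]"] by simp

lemma sc_run_mset: "mset (sc_run ok xs st out) = mset xs + mset st + mset out"
proof (induction ok xs st out rule: sc_run.induct)
  case (1 ok st out) then show ?case by (simp add: add_ac)
next
  case (2 ok x xs st out)
  show ?case
  proof (cases "ok (x # st)")
    case True then show ?thesis using 2(1) by (simp add: sc_run_push add_ac)
  next
    case False
    show ?thesis
    proof (cases st)
      case Nil then show ?thesis using False 2(2) by (simp add: sc_run_forced add_ac)
    next
      case (Cons y ys) then show ?thesis using False 2(3)[of y ys] by (simp add: sc_run_pop add_ac)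
    qed
  qed
qed

lemma sc_steps_mset: "sc_steps ok xs st out = (st', out') \<Longrightarrow> mset st' + mset out' = mset xs + mset st + mset out"
proof (induction ok xs st out rule: sc_steps.induct)
  case (1 ok st out) then show ?case by (simp add: add_ac)
next
  case (2 ok x xs st out)
  show ?case
  proof (cases "ok (x # st)")
    case True then show ?thesis using 2 by (simp add: sc_steps_push add_ac)
  next
    case False
    show ?thesis
    proof (cases st)
      case Nil then show ?thesis using False 2 by (simp add: sc_steps_forced add_ac)
    next
      case (Cons y ys) then show ?thesis using False 2(3)[of y ys] 2(4) by (simp add: sc_steps_pop add_ac)
    qed
  qed
qed

lemma sc_steps_out: "sc_steps ok xs st out = (st', out') \<Longrightarrow> \<exists>zs. out' = out @ zs"
proof (induction ok xs st out rule: sc_steps.induct)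
  case (1 ok st out) then show ?case by (simp add: add_ac)
next
  case (2 ok x xs st out)
  show ?case
  proof (cases "ok (x # st)")
    case True then show ?thesis using 2 by (simp add: sc_steps_push)
  next
    case False
    show ?thesis
    proof (cases st)
      case Nil then show ?thesis using False 2 by (simp add: sc_steps_forced)
    next
      case (Cons y ys) then show ?thesis using False 2(3)[of y ys] 2(4) by (auto simp add: sc_steps_pop)
    qed
  qed
qed

lemma sc_run_bottom:
  assumes H: "\<And>x S. x \<in> E \<Longrightarrow> set S \<subseteq> E \<Longrightarrow> I S \<Longrightarrow> okA (x # S @ B) = okB (x # S)"
    and P: "\<And>x S. x \<in> E \<Longrightarrow> set S \<subseteq> E \<Longrightarrow> I S \<Longrightarrow> okB (x # S) \<Longrightarrow> I (x # S)"
    and T: "\<And>y S. I (y # S) \<Longrightarrow> I S"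
    and O: "\<And>x. x \<in> E \<Longrightarrow> okB [x]"
  shows "set xs \<subseteq> E \<Longrightarrow> set st \<subseteq> E \<Longrightarrow> I st \<Longrightarrow> sc_run okA xs (st @ B) out = sc_run okB xs st out @ B"
proof -
  have "ok = okB \<Longrightarrow> set xs \<subseteq> E \<Longrightarrow> set st \<subseteq> E \<Longrightarrow> I st \<Longrightarrow> sc_run okA xs (st @ B) out = sc_run ok xs st out @ B" for ok
proof (induction ok xs st out rule: sc_run.induct)
  case (1 ok st out)
  then show ?case by simp
next
  case (2 ok x xs st out)
  show ?case
  proof (cases "ok (x # st)")
    case True
    then have "okA (x # st @ B)" using H[of x st] 2 by simp
    then show ?thesis using 2 True P[of x st] by (simp add: sc_run_push)
  next
    case False
    then have F: "\<not> okA (x # st @ B)" using H[of x st] 2 by simp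
    show ?thesis
    proof (cases st)
      case Nil
      then show ?thesis using False O[of x] 2 by simp
    next
      case (Cons y ys)
      then show ?thesis using F False 2(3)[of y ys] 2(4-) T[of y ys] by (simp add: sc_run_pop)
    qed
  qed
qed
  then show "set xs \<subseteq> E \<Longrightarrow> set st \<subseteq> E \<Longrightarrow> I st \<Longrightarrow> sc_run okA xs (st @ B) out = sc_run okB xs st out @ B" by blast
qed

lemma sc_run_flush:
  assumes "\<And>y S. y \<in> set st \<Longrightarrow> \<not> ok (m # y # S)"
  shows "sc_run ok (m # R) st out = sc_run ok (m # R) [] (out @ st)"
  using assms
proof (induction st arbitrary: out)
  case Nil then show ?case by simp
next
  case (Cons y ys)
  have "sc_run ok (m # R) (y # ys) out = sc_run ok (m # R) ys (out @ [y])"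
    using Cons.prems[of y ys] by (simp add: sc_run_pop)
  also have "\<dots> = sc_run ok (m # R) [] (out @ y # ys)" using Cons by simp
  finally show ?case .
qed



definition W :: "'a::linorder list \<Rightarrow> bool" where "W = avoids_vinc [2,1] {}"
definition okD :: "'a::linorder list \<Rightarrow> bool" where "okD = avoids_vinc [1,2] {}"
abbreviation "has231 \<equiv> has3 (\<lambda>a b c. c < a \<and> a < (b::'a::linorder))"
abbreviation "has213 \<equiv> has3 (\<lambda>a b c. b < a \<and> a < (c::'a::linorder))"

lemma W_iff: "W (w::'a::linorder list) \<longleftrightarrow> \<not> has2 (\<lambda>a b. b < a) w"
  unfolding W_def avoids_vinc_def vinc21 by simp

lemma okD_iff: "okD (w::'a::linorder list) \<longleftrightarrow> \<not> has2 (<) w"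
  unfolding okD_def avoids_vinc_def vinc12 by simp

lemma sorted_has2: "sorted (w::'a::linorder list) \<longleftrightarrow> \<not> has2 (\<lambda>a b. b < a) w"
  by (induction w) (auto simp: not_less)

lemma has2_mono: "has2 Q V \<Longrightarrow> (\<And>x y. x \<in> set V \<Longrightarrow> y \<in> set V \<Longrightarrow> Q x y \<Longrightarrow> Q' x y) \<Longrightarrow> has2 Q' V"
  by (induction V) auto

lemma has2_fst: "has2 Q V \<Longrightarrow> \<exists>y\<in>set V. \<exists>z\<in>set V. Q y z"
  by (induction V) auto

lemma has3_has2: "has3 P V \<Longrightarrow> (\<And>a b c. P a b c \<Longrightarrow> Q a b) \<Longrightarrow> has2 Q V"
  by (induction V) (auto dest!: has2_fst)

lemma has231_max:
  assumes lt: "\<And>x. x \<in> set L \<union> set R \<Longrightarrow> x < m"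
  shows "has231 (L @ m # R) \<longleftrightarrow> has231 L \<or> has231 R \<or> (\<exists>x\<in>set L. \<exists>z\<in>set R. z < x)"
proof
  assume "has231 (L @ m # R)"
  then have "has231 L \<or> has2 (\<lambda>b c. c < m \<and> m < b) R \<or> has231 R \<or>
    (\<exists>x\<in>set L. has2 (\<lambda>b c. c < x \<and> x < b) (m # R)) \<or> has2 (\<lambda>x y. \<exists>z\<in>set (m # R). z < x \<and> x < y) L"
    by (simp only: has3_append has3.simps disj_assoc)
  then show "has231 L \<or> has231 R \<or> (\<exists>x\<in>set L. \<exists>z\<in>set R. z < x)"
  proof (elim disjE)
    assume "has2 (\<lambda>b c. c < m \<and> m < b) R"
    then obtain y z where "y \<in> set R" "m < y" using has2_fst by blast
    then show ?thesis using lt[of y] by auto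
  next
    assume "\<exists>x\<in>set L. has2 (\<lambda>b c. c < x \<and> x < b) (m # R)"
    then obtain x where x: "x \<in> set L" "has2 (\<lambda>b c. c < x \<and> x < b) (m # R)" by blast
    then have "(\<exists>y\<in>set R. y < x \<and> x < m) \<or> has2 (\<lambda>b c. c < x \<and> x < b) R" by simp
    then show ?thesis
    proof
      assume "has2 (\<lambda>b c. c < x \<and> x < b) R"
      then obtain y z where "y \<in> set R" "z \<in> set R" "z < x" using has2_fst by blast
      then show ?thesis using x by blast
    qed (use x in blast)
  next
    assume "has2 (\<lambda>x y. \<exists>z\<in>set (m # R). z < x \<and> x < y) L"
    then obtain x y z where "x \<in> set L" "z \<in> set (m # R)" "z < x" using has2_fst by blast
    then show ?thesis using lt[of x] by auto
  qed simp_all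
next
  assume "has231 L \<or> has231 R \<or> (\<exists>x\<in>set L. \<exists>z\<in>set R. z < x)"
  then show "has231 (L @ m # R)"
  proof (elim disjE)
    assume "\<exists>x\<in>set L. \<exists>z\<in>set R. z < x"
    then obtain x z where "x \<in> set L" "z \<in> set R" "z < x" by blast
    then have "has2 (\<lambda>b c. c < x \<and> x < b) (m # R)" using lt[of x] by auto
    then show ?thesis using \<open>x \<in> set L\<close> by (auto simp: has3_append)
  qed (auto simp: has3_append)
qed

lemma has213_min:
  assumes lt: "\<And>x. x \<in> set L \<union> set R \<Longrightarrow> m < x"
  shows "has213 (L @ m # R) \<longleftrightarrow> has213 L \<or> has213 R \<or> (\<exists>x\<in>set L. \<exists>z\<in>set R. x < z)"
proof
  assume "has213 (L @ m # R)"
  then have "has213 L \<or> has2 (\<lambda>b c. b < m \<and> m < c) R \<or> has213 R \<or>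
    (\<exists>x\<in>set L. has2 (\<lambda>b c. b < x \<and> x < c) (m # R)) \<or> has2 (\<lambda>x y. \<exists>z\<in>set (m # R). y < x \<and> x < z) L"
    by (simp only: has3_append has3.simps disj_assoc)
  then show "has213 L \<or> has213 R \<or> (\<exists>x\<in>set L. \<exists>z\<in>set R. x < z)"
  proof (elim disjE)
    assume "has2 (\<lambda>b c. b < m \<and> m < c) R"
    then obtain y z where "y \<in> set R" "y < m" using has2_fst by blast
    then show ?thesis using lt[of y] by auto
  next
    assume "\<exists>x\<in>set L. has2 (\<lambda>b c. b < x \<and> x < c) (m # R)"
    then obtain x where x: "x \<in> set L" "has2 (\<lambda>b c. b < x \<and> x < c) (m # R)" by blast
    then have "(\<exists>y\<in>set R. m < x \<and> x < y) \<or> has2 (\<lambda>b c. b < x \<and> x < c) R" by simp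
    then show ?thesis
    proof
      assume "has2 (\<lambda>b c. b < x \<and> x < c) R"
      then obtain y z where "y \<in> set R" "z \<in> set R" "x < z" using has2_fst by blast
      then show ?thesis using x by blast
    qed (use x in blast)
  next
    assume "has2 (\<lambda>x y. \<exists>z\<in>set (m # R). y < x \<and> x < z) L"
    then obtain x y z where "x \<in> set L" "y \<in> set L" "z \<in> set (m # R)" "y < x" "x < z" using has2_fst by blast
    then show ?thesis using lt[of x] by auto
  qed simp_all
next
  assume "has213 L \<or> has213 R \<or> (\<exists>x\<in>set L. \<exists>z\<in>set R. x < z)"
  then show "has213 (L @ m # R)"
  proof (elim disjE)
    assume "\<exists>x\<in>set L. \<exists>z\<in>set R. x < z"
    then obtain x z where "x \<in> set L" "z \<in> set R" "x < z" by blast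
    then have "has2 (\<lambda>b c. b < x \<and> x < c) (m # R)" using lt[of x] by auto
    then show ?thesis using \<open>x \<in> set L\<close> by (auto simp: has3_append)
  qed (auto simp: has3_append)
qed



lemma sc_run_set: "set (sc_run ok xs [] []) = set xs"
  using arg_cong[OF sc_run_mset[of ok xs "[]" "[]"], of set_mset] by simp

lemma sc_steps_set: "sc_steps ok xs st out = (st', out') \<Longrightarrow> set st' \<union> set out' = set xs \<union> set st \<union> set out"
  using arg_cong[OF sc_steps_mset, of _ _ _ _ _ _ set_mset] by simp

lemma west_dec:
  fixes L R :: "'a::linorder list"
  assumes lt: "\<And>x. x \<in> set L \<union> set R \<Longrightarrow> x < m"
  shows "sc_run W (L @ m # R) [] [] = sc_run W L [] [] @ sc_run W R [] [] @ [m]"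
proof -
  obtain st' out' where S: "sc_steps W L [] [] = (st', out')" by (cases "sc_steps W L [] []")
  have sub: "set st' \<subseteq> set L" using sc_steps_set[OF S] by auto
  have 1: "sc_run W (L @ m # R) [] [] = sc_run W (m # R) st' out'"
    using sc_run_split[of W L "m # R" "[]" "[]"] S by simp
  also have "\<dots> = sc_run W (m # R) [] (out' @ st')"
  proof (rule sc_run_flush)
    fix y S assume "y \<in> set st'"
    then have "y < m" using sub lt by auto
    then show "\<not> W (m # y # S)" unfolding W_iff by simp
  qed
  also have "\<dots> = sc_run W R [m] (out' @ st')" by (simp add: sc_run_push W_iff)
  also have "\<dots> = sc_run W R [] (out' @ st') @ [m]"
  proof -
    have Hb: "W (x # S @ [m]) = W (x # S)" if "x \<in> {z. z < m}" "set S \<subseteq> {z. z < m}" "W S" for x S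
      using that by (auto simp: W_iff has2_append)
    have "sc_run W R ([] @ [m]) (out' @ st') = sc_run W R [] (out' @ st') @ [m]"
      by (rule sc_run_bottom[where E="{z. z < m}" and I=W and okA=W and okB=W and B="[m]", OF Hb]) (use lt in \<open>auto simp: W_iff\<close>)
    then show ?thesis by simp
  qed
  also have "\<dots> = (out' @ st') @ sc_run W R [] [] @ [m]" by (subst sc_run_out0) simp
  finally show ?thesis using sc_run_steps[of W L "[]" "[]"] S by simp
qed

lemma d_dec:
  fixes L R :: "'a::linorder list"
  assumes gt: "\<And>x. x \<in> set L \<union> set R \<Longrightarrow> m < x"
  shows "sc_run okD (L @ m # R) [] [] = sc_run okD L [] [] @ sc_run okD R [] [] @ [m]"
proof -
  obtain st' out' where S: "sc_steps okD L [] [] = (st', out')" by (cases "sc_steps okD L [] []")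
  have sub: "set st' \<subseteq> set L" using sc_steps_set[OF S] by auto
  have 1: "sc_run okD (L @ m # R) [] [] = sc_run okD (m # R) st' out'"
    using sc_run_split[of okD L "m # R" "[]" "[]"] S by simp
  also have "\<dots> = sc_run okD (m # R) [] (out' @ st')"
  proof (rule sc_run_flush)
    fix y S assume "y \<in> set st'"
    then have "m < y" using sub gt by auto
    then show "\<not> okD (m # y # S)" unfolding okD_iff by simp
  qed
  also have "\<dots> = sc_run okD R [m] (out' @ st')" by (simp add: sc_run_push okD_iff)
  also have "\<dots> = sc_run okD R [] (out' @ st') @ [m]"
  proof -
    have Hb: "okD (x # S @ [m]) = okD (x # S)" if "x \<in> {z. m < z}" "set S \<subseteq> {z. m < z}" "okD S" for x S
      using that by (auto simp: okD_iff has2_append)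
    have "sc_run okD R ([] @ [m]) (out' @ st') = sc_run okD R [] (out' @ st') @ [m]"
      by (rule sc_run_bottom[where E="{z. m < z}" and I=okD and okA=okD and okB=okD and B="[m]", OF Hb]) (use gt in \<open>auto simp: okD_iff\<close>)
    then show ?thesis by simp
  qed
  also have "\<dots> = (out' @ st') @ sc_run okD R [] [] @ [m]" by (subst sc_run_out0) simp
  finally show ?thesis using sc_run_steps[of okD L "[]" "[]"] S by simp
qed

lemma west_thm: "distinct (w::'a::linorder list) \<Longrightarrow> sorted (sc_run W w [] []) \<longleftrightarrow> \<not> has231 w"
proof (induction "length w" arbitrary: w rule: less_induct)
  case less
  show ?case
  proof (cases "w = []")
    case True then show ?thesis by simp
  next
    case False
    define m where "m = Max (set w)"
    have "m \<in> set w" using False by (simp add: m_def)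
    then obtain L R where w: "w = L @ m # R" by (meson split_list)
    have d: "distinct L" "distinct R" "m \<notin> set L" "m \<notin> set R" using less.prems w by auto
    have lt: "x < m" if "x \<in> set L \<union> set R" for x
    proof -
      have "x \<in> set w" using that w by auto
      then have "x \<le> m" unfolding m_def by simp
      moreover have "x \<noteq> m" using that d by auto
      ultimately show ?thesis by simp
    qed
    have IL: "sorted (sc_run W L [] []) \<longleftrightarrow> \<not> has231 L" using less.hyps[of L] d w by simp
    have IR: "sorted (sc_run W R [] []) \<longleftrightarrow> \<not> has231 R" using less.hyps[of R] d w by simp
    have "sorted (sc_run W w [] []) \<longleftrightarrow> sorted (sc_run W L [] []) \<and> sorted (sc_run W R [] []) \<and>
        (\<forall>x\<in>set L. \<forall>y\<in>set R. x \<le> y)"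
    proof -
      have dec: "sc_run W w [] [] = sc_run W L [] [] @ sc_run W R [] [] @ [m]"
        unfolding w by (rule west_dec) (use lt in blast)
      show ?thesis unfolding dec using lt by (auto simp: sorted_append sc_run_set less_imp_le)
    qed
    also have "\<dots> \<longleftrightarrow> \<not> has231 w" using has231_max[OF lt] IL IR w by (auto simp: not_less)
    finally show ?thesis .
  qed
qed

lemma d_thm: "distinct (w::'a::linorder list) \<Longrightarrow> has2 (<) (sc_run okD w [] []) \<longleftrightarrow> has213 w"
proof (induction "length w" arbitrary: w rule: less_induct)
  case less
  show ?case
  proof (cases "w = []")
    case True then show ?thesis by simp
  next
    case False
    define m where "m = Min (set w)"
    have "m \<in> set w" using False by (simp add: m_def)
    then obtain L R where w: "w = L @ m # R" by (meson split_list)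
    have d: "distinct L" "distinct R" "m \<notin> set L" "m \<notin> set R" using less.prems w by auto
    have gt: "m < x" if "x \<in> set L \<union> set R" for x
    proof -
      have "x \<in> set w" using that w by auto
      then have "m \<le> x" unfolding m_def by simp
      moreover have "x \<noteq> m" using that d by auto
      ultimately show ?thesis by simp
    qed
    have IL: "has2 (<) (sc_run okD L [] []) \<longleftrightarrow> has213 L" using less.hyps[of L] d w by simp
    have IR: "has2 (<) (sc_run okD R [] []) \<longleftrightarrow> has213 R" using less.hyps[of R] d w by simp
    have "has2 (<) (sc_run okD w [] []) \<longleftrightarrow> has2 (<) (sc_run okD L [] []) \<or> has2 (<) (sc_run okD R [] []) \<or>
        (\<exists>x\<in>set L. \<exists>y\<in>set R. x < y)"
    proof -
      have dec: "sc_run okD w [] [] = sc_run okD L [] [] @ sc_run okD R [] [] @ [m]"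
        unfolding w by (rule d_dec) (use gt in blast)
      have gtL: "\<And>x. x \<in> set L \<Longrightarrow> m < x" and gtR: "\<And>x. x \<in> set R \<Longrightarrow> m < x" using gt by auto
      show ?thesis unfolding dec by (auto simp: has2_append sc_run_set dest: gtL gtR)
    qed
    also have "\<dots> \<longleftrightarrow> has213 w" using has213_min[OF gt] IL IR w by auto
    finally show ?thesis .
  qed
qed

lemma d231_thm: "distinct (w::'a::linorder list) \<Longrightarrow> has231 (sc_run okD w [] []) \<longleftrightarrow> has213 w"
proof (cases "w = []")
  case True then show ?thesis by simp
next
  case False
  assume dw: "distinct w"
  define m where "m = Min (set w)"
  have "m \<in> set w" using False by (simp add: m_def)
  then obtain L R where w: "w = L @ m # R" by (meson split_list)
  have d: "m \<notin> set L" "m \<notin> set R" using dw w by auto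
  have gt: "m < x" if "x \<in> set L \<union> set R" for x
  proof -
    have "x \<in> set w" using that w by auto
      then have "m \<le> x" unfolding m_def by simp
    moreover have "x \<noteq> m" using that d by auto
    ultimately show ?thesis by simp
  qed
  define V where "V = sc_run okD L [] [] @ sc_run okD R [] []"
  have D: "sc_run okD w [] [] = V @ [m]" unfolding w V_def by (simp, rule d_dec) (use gt in blast)
  have gV: "m < x" if "x \<in> set V" for x using gt that by (auto simp: V_def sc_run_set)
  have "has231 (V @ [m]) \<longleftrightarrow> has231 V \<or> has2 (\<lambda>x y. m < x \<and> x < y) V"
    by (simp add: has3_append)
  also have "\<dots> \<longleftrightarrow> has2 (<) V"
  proof
    assume "has231 V \<or> has2 (\<lambda>x y. m < x \<and> x < y) V"
    then show "has2 (<) V"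
    proof
      assume "has231 V" then show ?thesis by (rule has3_has2) simp
    next
      assume "has2 (\<lambda>x y. m < x \<and> x < y) V" then show ?thesis by (rule has2_mono) simp
    qed
  next
    assume "has2 (<) V"
    then have "has2 (\<lambda>x y. m < x \<and> x < y) V" by (rule has2_mono) (use gV in simp)
    then show "has231 V \<or> has2 (\<lambda>x y. m < x \<and> x < y) V" by simp
  qed
  also have "\<dots> \<longleftrightarrow> has2 (<) (V @ [m])" by (auto simp: has2_append dest: gV)
  finally show ?thesis using D d_thm[OF dw] by simp
qed



definition ok3 :: "'a::linorder list \<Rightarrow> bool" where "ok3 = avoids_vinc [1,2,3] {0}"

lemma ok3_iff: "ok3 w \<longleftrightarrow> \<not> c123 w"
  unfolding ok3_def avoids_vinc_def vinc123 by simp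

lemma c123_single: "\<not> c123 [x]"
  unfolding c123_def by auto

lemma phaseA1:
  fixes ta :: "'a::linorder list"
  shows "\<not> c321 p \<Longrightarrow> sc_steps ok3 ta (rev p) [] = (st', out') \<Longrightarrow>
     (out' = [] \<longleftrightarrow> \<not> c321 (p @ ta)) \<and> (out' = [] \<longrightarrow> st' = rev (p @ ta))"
proof (induction ta arbitrary: p st' out')
  case Nil then show ?case by simp
next
  case (Cons x ta)
  show ?case
  proof (cases "c321 (p @ [x])")
    case False
    then have "ok3 (x # rev p)" using c123_rev[of "p @ [x]"] by (simp add: ok3_iff)
    then have "sc_steps ok3 ta (rev (p @ [x])) [] = (st', out')"
      using Cons.prems(2) by (simp add: sc_steps_push)
    from Cons.IH[OF False this] show ?thesis by simp
  next
    case True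
    then have "p \<noteq> []" using c321_single[of x] by auto
    then obtain y ys where r: "rev p = y # ys" by (cases "rev p") auto
    have "\<not> ok3 (x # rev p)" using True c123_rev[of "p @ [x]"] by (simp add: ok3_iff)
    then have "sc_steps ok3 (x # ta) ys [y] = (st', out')"
      using Cons.prems(2) r sc_steps_pop[of ok3 x y ys ta "[]"] by simp
    then obtain zs where "out' = [y] @ zs" using sc_steps_out by blast
    moreover have "c321 (p @ x # ta)" using c321_append[OF True, of ta] by simp
    ultimately show ?thesis by simp
  qed
qed

lemma phaseA2_gen:
  "ok = ok3 \<Longrightarrow> sc_steps ok xs st out = (st', out') \<Longrightarrow> \<not> c123 (st::'a::linorder list) \<Longrightarrow>
   (\<forall>c\<in>set out. \<exists>z\<in>set st \<union> set xs. z < c) \<Longrightarrow> \<not> c123 st' \<and> (\<forall>c\<in>set out'. \<exists>z\<in>set st'. z < c)"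
proof (induction ok xs st out arbitrary: st' out' rule: sc_steps.induct)
  case (1 ok st out) then show ?case by simp
next
  case (2 ok x xs st out)
  show ?case
  proof (cases "ok (x # st)")
    case True
    then have "sc_steps ok xs (x # st) out = (st', out')" using 2 by (simp add: sc_steps_push)
    moreover have "\<not> c123 (x # st)" using True 2(4) by (simp add: ok3_iff)
    ultimately show ?thesis using 2(1)[OF True 2(4)] 2(7) by auto
  next
    case False
    show ?thesis
    proof (cases st)
      case Nil
      then have "sc_steps ok xs [x] out = (st', out')" using 2 False by (simp add: sc_steps_forced)
      then show ?thesis using 2(2)[OF False Nil 2(4)] 2(7) Nil c123_single by auto
    next
      case (Cons y ys)
      have st: "sc_steps ok (x # xs) ys (out @ [y]) = (st', out')"
        using 2(5) False Cons by (simp add: sc_steps_pop)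
      have ny: "\<not> c123 (y # ys)" using 2(6) Cons by simp
      have "c123 (x # y # ys)" using False 2(4) Cons by (simp add: ok3_iff)
      then have xy: "x < y" using ny c123_Cons[of x "y # ys"] by auto
      have nys: "\<not> c123 ys" using ny c123_Cons[of y ys] by auto
      have inv: "\<forall>c\<in>set (out @ [y]). \<exists>z\<in>set ys \<union> set (x # xs). z < c"
      proof
        fix c assume c: "c \<in> set (out @ [y])"
        show "\<exists>z\<in>set ys \<union> set (x # xs). z < c"
        proof (cases "c = y")
          case True then show ?thesis using xy by auto
        next
          case False
          then have "c \<in> set out" using c by simp
          then obtain z where z: "z \<in> set st \<union> set (x # xs)" "z < c" using 2(7) by blast
          show ?thesis
          proof (cases "z = y")
            case True then show ?thesis using xy z by auto
          next
            case False then show ?thesis using z Cons by auto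
          qed
        qed
      qed
      show ?thesis using 2(3)[OF False Cons 2(4) st nys inv] .
    qed
  qed
qed

lemma phaseA2:
  "sc_steps ok3 (ta::'a::linorder list) [] [] = (st', out') \<Longrightarrow> \<not> c123 st' \<and> (\<forall>c\<in>set out'. \<exists>z\<in>set st'. z < c)"
  using phaseA2_gen[of ok3 ta "[]" "[]" st' out'] unfolding c123_def by simp

lemma phaseB:
  fixes S0 tb :: "'a::linorder list"
  assumes S0: "\<forall>z\<in>set S0. z < n" and nS0: "\<not> c123 S0" and tb: "set tb \<subseteq> {z. z < n}"
  shows "sc_run ok3 tb (n # S0) out = sc_run okD tb [] out @ n # S0"
proof -
  define I where "I = (\<lambda>U. okD U \<and> \<not> c123 (U @ n # S0))"
  have nS: "\<not> c123 (n # S0)" using nS0 S0 c123_Cons[of n S0] by auto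
  have H: "ok3 (x # U @ n # S0) = okD (x # U)" if "x \<in> {z. z < n}" "set U \<subseteq> {z. z < n}" "I U" for x U
  proof (cases U)
    case Nil
    then show ?thesis using nS S0 c123_Cons[of x "n # S0"] by (auto simp: ok3_iff okD_iff)
  next
    case (Cons t U')
    have tn: "t < n" using that Cons by auto
    have c: "\<not> c123 (U @ n # S0)" "\<not> has2 (<) U" using that(3) by (auto simp: I_def okD_iff)
    have "ok3 (x # U @ n # S0) \<longleftrightarrow> \<not> x < t"
      using c(1) c123_Cons[of x "U @ n # S0"] Cons tn by (auto simp: ok3_iff)
    moreover have "okD (x # U) \<longleftrightarrow> \<not> x < t"
      using c(2) Cons by (auto simp: okD_iff not_less intro: less_le_trans)
    ultimately show ?thesis by simp
  qed
  have "sc_run ok3 tb ([] @ n # S0) out = sc_run okD tb [] out @ n # S0"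
  proof (rule sc_run_bottom[where E="{z. z < n}" and I=I and okA=ok3 and okB=okD and B="n # S0", OF H])
    show "I (x # S)" if "x \<in> {z. z < n}" "set S \<subseteq> {z. z < n}" "I S" "okD (x # S)" for x S
      using that H[OF that(1-3)] by (auto simp: I_def ok3_iff)
    show "I S" if "I (y # S)" for y S
      using that c123_Cons[of y "S @ n # S0"] by (auto simp: I_def okD_iff)
    show "okD [x]" for x by (simp add: okD_iff)
    show "set tb \<subseteq> {z. z < n}" by (rule tb)
    show "set [] \<subseteq> {z. z < n}" by simp
    show "I []" using nS by (simp add: I_def okD_iff)
  qed
  then show ?thesis by simp
qed



lemma sorted_upt_iff:
  assumes "distinct Y" "set Y = {1..n}"
  shows "Y = [1..<n+1] \<longleftrightarrow> sorted Y"
proof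
  assume "sorted Y"
  moreover have "sorted [1..<n+1]" by (rule sorted_upt)
  moreover have "distinct [1..<n+1]" by (rule distinct_upt)
  moreover have "set [1..<n+1] = {1..n}" by auto
  ultimately show "Y = [1..<n+1]"
    using assms by (intro sorted_distinct_set_unique) auto
next
  assume Y: "Y = [1..<n+1]"
  show "sorted Y" unfolding Y by (rule sorted_upt)
qed

theorem mainTheorem12:
  fixes n :: nat and tau ta tb :: "nat list"
  assumes "n \<ge> 1"
    and "tau \<in> perms n"
    and "tau = ta @ n # tb"
  shows "tau \<in> Sort n [1, 2, 3] {0} \<longleftrightarrow>
           ((\<forall>a\<in>set ta. \<forall>b\<in>set tb. b < a) \<and>
            avoids_vinc [3, 2, 1] {1} ta \<and> avoids_vinc [1, 3, 2] {} ta \<and>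
            avoids_vinc [2, 1, 3] {} tb)"
proof -
  have dt: "distinct tau" "set tau = {1..n}" using assms(2) by (auto simp: perms_def)
  have d: "distinct ta" "distinct tb" "n \<notin> set ta" "n \<notin> set tb" "set ta \<inter> set tb = {}"
    using dt(1) assms(3) by auto
  have ltn: "x < n" if "x \<in> set ta \<union> set tb" for x
  proof -
    have "x \<in> set tau" using that assms(3) by auto
    then have "x \<le> n" using dt by auto
    moreover have "x \<noteq> n" using that d by auto
    ultimately show ?thesis by simp
  qed
  obtain st' out' where S: "sc_steps ok3 ta [] [] = (st', out')" by (cases "sc_steps ok3 ta [] []")
  have A2: "\<not> c123 st'" "\<forall>c\<in>set out'. \<exists>z\<in>set st'. z < c" using phaseA2[OF S] by auto
  have A1: "(out' = [] \<longleftrightarrow> \<not> c321 ta) \<and> (out' = [] \<longrightarrow> st' = rev ta)"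
    using phaseA1[of "[]" ta st' out'] S unfolding c321_def by simp
  have sset: "set st' \<union> set out' = set ta" using sc_steps_set[OF S] by simp
  have st_lt: "\<forall>z\<in>set st'. z < n" using sset ltn by auto
  define Dtb where "Dtb = sc_run okD tb [] []"
  define X where "X = out' @ Dtb @ n # st'"
  have SC: "SC [1,2,3] {0} tau = X"
  proof -
    have "SC [1,2,3] {0} tau = sc_run ok3 tau [] []" by (simp add: SC_def ok3_def)
    also have "\<dots> = sc_run ok3 (n # tb) st' out'"
      using sc_run_split[of ok3 ta "n # tb" "[]" "[]"] S assms(3) by simp
    also have "\<dots> = sc_run ok3 tb (n # st') out'"
    proof (rule sc_run_push)
      show "ok3 (n # st')" using A2(1) st_lt c123_Cons[of n st'] by (auto simp: ok3_iff)
    qed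
    also have "\<dots> = sc_run okD tb [] out' @ n # st'"
      by (rule phaseB) (use st_lt A2(1) ltn in auto)
    also have "\<dots> = X" unfolding X_def Dtb_def by (subst sc_run_out0) simp
    finally show ?thesis .
  qed
  have msX: "mset X = mset tau"
    using SC sc_run_mset[of "avoids_vinc [1,2,3] {0}" tau "[]" "[]"] by (simp add: SC_def)
  have dX: "distinct X" "set X = {1..n}"
    using msX dt mset_eq_imp_distinct_iff[OF msX] mset_eq_setD[OF msX] by auto
  have ws: "west_s X = sc_run W X [] []" by (simp add: west_s_def SC_def W_def)
  have msW: "mset (west_s X) = mset X" using ws sc_run_mset[of W X "[]" "[]"] by simp
  have dW: "distinct (west_s X)" "set (west_s X) = {1..n}"
    using dX mset_eq_imp_distinct_iff[OF msW] mset_eq_setD[OF msW] by auto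
  have LHS: "tau \<in> Sort n [1, 2, 3] {0} \<longleftrightarrow> \<not> has231 X"
  proof -
    have "tau \<in> Sort n [1, 2, 3] {0} \<longleftrightarrow> west_s X = [1..<n+1]"
      using assms(2) SC by (simp add: Sort_def)
    also have "\<dots> \<longleftrightarrow> sorted (west_s X)" using sorted_upt_iff[OF dW] .
    also have "\<dots> \<longleftrightarrow> \<not> has231 X" using west_thm[OF dX(1)] ws by simp
    finally show ?thesis .
  qed
  have R1: "avoids_vinc [3, 2, 1] {1} ta \<longleftrightarrow> \<not> c321 ta" unfolding avoids_vinc_def vinc321 by simp
  have R2: "avoids_vinc [1, 3, 2] {} ta \<longleftrightarrow> \<not> has3 (\<lambda>a b c. a < c \<and> c < b) ta" unfolding avoids_vinc_def vinc132 by simp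
  have R3: "avoids_vinc [2, 1, 3] {} tb \<longleftrightarrow> \<not> has213 tb" unfolding avoids_vinc_def vinc213 by simp
  have setD: "set Dtb = set tb" by (simp add: Dtb_def sc_run_set)
  show ?thesis
  proof (cases "out' = []")
    case False
    then have "c321 ta" using A1 by simp
    obtain c where c: "c \<in> set out'" using False by (cases out') auto
    then obtain z where z: "z \<in> set st'" "z < c" using A2(2) by blast
    have lt: "x < n" if "x \<in> set (out' @ Dtb) \<union> set st'" for x
      using that sset ltn setD by auto
    have eqX: "X = (out' @ Dtb) @ n # st'" unfolding X_def by simp
    have "\<exists>x\<in>set (out' @ Dtb). \<exists>z\<in>set st'. z < x" using c z by auto
    then have "has231 X" unfolding eqX using has231_max[of "out' @ Dtb" st' n, OF lt] by blast
    then have "tau \<notin> Sort n [1, 2, 3] {0}" using LHS by blast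
    moreover have "\<not> avoids_vinc [3, 2, 1] {1} ta" using R1 \<open>c321 ta\<close> by blast
    ultimately show ?thesis by blast
  next
    case True
    then have nc: "\<not> c321 ta" and st: "st' = rev ta" using A1 by auto
    have lt: "x < n" if "x \<in> set Dtb \<union> set (rev ta)" for x
      using that ltn setD by auto
    have "has231 X \<longleftrightarrow> has231 Dtb \<or> has231 (rev ta) \<or> (\<exists>x\<in>set Dtb. \<exists>z\<in>set (rev ta). z < x)"
      unfolding X_def True st using has231_max[of Dtb "rev ta" n, OF lt] by simp
    also have "\<dots> \<longleftrightarrow> has213 tb \<or> has3 (\<lambda>a b c. a < c \<and> c < b) ta \<or> \<not> (\<forall>a\<in>set ta. \<forall>b\<in>set tb. b < a)"
    proof -
      have "has231 Dtb \<longleftrightarrow> has213 tb" unfolding Dtb_def using d231_thm[OF d(2)] .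
      moreover have "has231 (rev ta) \<longleftrightarrow> has3 (\<lambda>a b c. a < c \<and> c < b) ta" by (simp add: has3_rev)
      moreover have "(\<exists>x\<in>set Dtb. \<exists>z\<in>set (rev ta). z < x) \<longleftrightarrow> \<not> (\<forall>a\<in>set ta. \<forall>b\<in>set tb. b < a)"
      proof
        assume "\<exists>x\<in>set Dtb. \<exists>z\<in>set (rev ta). z < x"
        then obtain x z where "x \<in> set tb" "z \<in> set ta" "z < x" using setD by auto
        then show "\<not> (\<forall>a\<in>set ta. \<forall>b\<in>set tb. b < a)" by force
      next
        assume "\<not> (\<forall>a\<in>set ta. \<forall>b\<in>set tb. b < a)"
        then obtain a b where ab: "a \<in> set ta" "b \<in> set tb" "\<not> b < a" by blast
        then have "a \<noteq> b" using d(5) by blast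
        then have "a < b" using ab(3) by simp
        then show "\<exists>x\<in>set Dtb. \<exists>z\<in>set (rev ta). z < x" using ab setD by auto
      qed
      ultimately show ?thesis by simp
    qed
    finally have "has231 X \<longleftrightarrow> has213 tb \<or> has3 (\<lambda>a b c. a < c \<and> c < b) ta \<or> \<not> (\<forall>a\<in>set ta. \<forall>b\<in>set tb. b < a)" .
    then show ?thesis unfolding LHS R1 R2 R3 using nc by blast
  qed
qed


end
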